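(* Let $B$ be a $\mathbb{Z}$-graded integral domain containing a field $k$. If $B$ has a cylindrical element, then there exists a field $K$ with $k\subseteq K\subseteq \operatorname{Frac}(B)$ such that $\operatorname{Frac}(B)$ is a purely transcendental extension of $K$ of transcendence degree $2$.
   Context: For a nonzero homogeneous $f\in B$, $B_{(f)}$ denotes the degree-$0$ subring of the graded ring $B_f=S^{-1}B$, $S=\{1,f,f^2,\dots\}$. A ring $C$ is a polynomial ring in one variable if there is a subring $A\subseteq C$ such that $C$ is a polynomial ring in one variable over $A$ (the zero ring counts). An element $f$ of a $\mathbb{Z}$-graded domain $B$ is cylindrical if it is nonzero, homogeneous of nonzero degree, and $B_{(f)}$ is a polynomial ring in one variable. *)

theory Defs
  imports "HOL-Computational_Algebra.Polynomial" "HOL-Computational_Algebra.Fraction_Field"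
begin

definition is_subring :: "'a::comm_ring_1 set \<Rightarrow> bool" where
  "is_subring A \<longleftrightarrow> 0 \<in> A \<and> 1 \<in> A \<and>
     (\<forall>a\<in>A. \<forall>b\<in>A. a + b \<in> A \<and> a - b \<in> A \<and> a * b \<in> A)"

definition is_subfield :: "'a::comm_ring_1 set \<Rightarrow> bool" where
  "is_subfield A \<longleftrightarrow> is_subring A \<and> (\<forall>a\<in>A. a \<noteq> 0 \<longrightarrow> (\<exists>b\<in>A. a * b = 1))"

text \<open>A Z-grading B = (direct sum over d) B_d, with B_d B_e contained in B_(d+e).\<close>
definition Z_grading :: "(int \<Rightarrow> 'b::comm_ring_1 set) \<Rightarrow> bool" where
  "Z_grading G \<longleftrightarrow>
     (\<forall>d. 0 \<in> G d \<and> (\<forall>a\<in>G d. \<forall>b\<in>G d. a + b \<in> G d \<and> - a \<in> G d)) \<and>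
     (\<forall>d e. \<forall>a\<in>G d. \<forall>b\<in>G e. a * b \<in> G (d + e)) \<and>
     (\<forall>b. \<exists>c. finite {d. c d \<noteq> 0} \<and> (\<forall>d. c d \<in> G d) \<and> b = (\<Sum>d\<in>{d. c d \<noteq> 0}. c d)) \<and>
     (\<forall>c. finite {d. c d \<noteq> 0} \<and> (\<forall>d. c d \<in> G d) \<and> (\<Sum>d\<in>{d. c d \<noteq> 0}. c d) = 0
          \<longrightarrow> (\<forall>d. c d = 0))"

text \<open>Degree-0 part B_(f) of B_f, for f homogeneous of degree d, realised inside Frac(B):
  the elements a / f^n with a homogeneous of degree n*d.\<close>
definition hloc0 :: "(int \<Rightarrow> 'b::idom set) \<Rightarrow> int \<Rightarrow> 'b \<Rightarrow> 'b fract set" where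
  "hloc0 G d f = {x. \<exists>n::nat. \<exists>a\<in>G (int n * d). x = Fract a (f ^ n)}"

definition poly_ring1 :: "'a::comm_ring_1 set \<Rightarrow> bool" where
  "poly_ring1 C \<longleftrightarrow> (\<exists>A t. is_subring A \<and> A \<subseteq> C \<and> t \<in> C \<and>
      C = {poly p t | p. set (coeffs p) \<subseteq> A} \<and>
      (\<forall>p. set (coeffs p) \<subseteq> A \<and> poly p t = 0 \<longrightarrow> p = 0))"

definition cylindrical :: "(int \<Rightarrow> 'b::idom set) \<Rightarrow> 'b \<Rightarrow> bool" where
  "cylindrical G f \<longleftrightarrow> f \<noteq> 0 \<and> (\<exists>d. d \<noteq> 0 \<and> f \<in> G d \<and> poly_ring1 (hloc0 G d f))"

definition alg_indep2 :: "'a::field set \<Rightarrow> 'a \<Rightarrow> 'a \<Rightarrow> bool" where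
  "alg_indep2 K x y \<longleftrightarrow> (\<forall>P :: 'a poly poly.
      (\<forall>q\<in>set (coeffs P). set (coeffs q) \<subseteq> K) \<and> poly (map_poly (\<lambda>q. poly q x) P) y = 0
      \<longrightarrow> P = 0)"

definition field_gen :: "'a::field set \<Rightarrow> 'a set" where
  "field_gen S = \<Inter>{L. is_subfield L \<and> S \<subseteq> L}"

end

theory Submission
  imports Defs
begin
locale zg =
  fixes G :: "int \<Rightarrow> 'b::idom set"
  assumes zg: "Z_grading G"
begin

lemma G0: "0 \<in> G n" using zg unfolding Z_grading_def by blast
lemma G_add: "a \<in> G n \<Longrightarrow> b \<in> G n \<Longrightarrow> a + b \<in> G n" using zg unfolding Z_grading_def by blast
lemma G_neg: "a \<in> G n \<Longrightarrow> - a \<in> G n" using zg unfolding Z_grading_def by blast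
lemma G_diff: "a \<in> G n \<Longrightarrow> b \<in> G n \<Longrightarrow> a - b \<in> G n"
  using G_add[of a n "-b"] G_neg[of b n] by simp
lemma G_mult: "a \<in> G n \<Longrightarrow> b \<in> G m \<Longrightarrow> a * b \<in> G (n + m)" using zg unfolding Z_grading_def by blast
lemma G_dec: "\<exists>c. finite {d. c d \<noteq> 0} \<and> (\<forall>d. c d \<in> G d) \<and> b = (\<Sum>d\<in>{d. c d \<noteq> 0}. c d)"
  using zg unfolding Z_grading_def by blast
lemma G_ind: "finite {d. c d \<noteq> 0} \<Longrightarrow> (\<forall>d. c d \<in> G d) \<Longrightarrow> (\<Sum>d\<in>{d. c d \<noteq> 0}. c d) = 0 \<Longrightarrow> c d = 0"
  using zg unfolding Z_grading_def by blast

lemma G_sum: "finite S \<Longrightarrow> (\<And>x. x \<in> S \<Longrightarrow> g x \<in> G n) \<Longrightarrow> sum g S \<in> G n"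
  by (induction S rule: finite_induct) (auto intro: G0 G_add)

lemma BL:
  assumes fin: "finite I" and hb: "\<And>\<alpha>. \<alpha>\<in>I \<Longrightarrow> b \<alpha> \<in> G (\<delta> \<alpha>)" and r: "r \<in> G m"
    and sm: "(\<Sum>\<alpha>\<in>I. b \<alpha>) = r"
    and a0: "\<alpha>0 \<in> I" "\<delta> \<alpha>0 \<noteq> m" "\<And>\<alpha>. \<alpha>\<in>I \<Longrightarrow> \<delta> \<alpha> = \<delta> \<alpha>0 \<Longrightarrow> \<alpha> = \<alpha>0"
  shows "b \<alpha>0 = 0"
proof -
  define c where "c n = (\<Sum>\<alpha>\<in>{\<alpha>. \<alpha> \<in> I \<and> \<delta> \<alpha> = n}. b \<alpha>) - (if n = m then r else 0)" for n
  have cG: "c n \<in> G n" for n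
    unfolding c_def using fin hb r
    by (intro G_diff G_sum) (auto intro: G0)
  define U where "U = insert m (\<delta> ` I)"
  have finU: "finite U" using fin U_def by simp
  have supp: "{n. c n \<noteq> 0} \<subseteq> U"
  proof
    fix n assume "n \<in> {n. c n \<noteq> 0}"
    then have "c n \<noteq> 0" by simp
    show "n \<in> U"
    proof (rule ccontr)
      assume "n \<notin> U"
      then have e: "{\<alpha>. \<alpha> \<in> I \<and> \<delta> \<alpha> = n} = {}" "n \<noteq> m" unfolding U_def by auto
      have "c n = 0" unfolding c_def e(1) using e(2) by simp
      with \<open>c n \<noteq> 0\<close> show False by simp
    qed
  qed
  have finS: "finite {n. c n \<noteq> 0}" using finU supp finite_subset by blast
  have "(\<Sum>n\<in>{n. c n \<noteq> 0}. c n) = (\<Sum>n\<in>U. c n)"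
    by (rule sum.mono_neutral_left[OF finU supp]) auto
  also have "\<dots> = (\<Sum>n\<in>U. \<Sum>\<alpha>\<in>{\<alpha>. \<alpha> \<in> I \<and> \<delta> \<alpha> = n}. b \<alpha>) - (\<Sum>n\<in>U. if n = m then r else 0)"
    unfolding c_def by (simp add: sum_subtractf)
  also have "(\<Sum>n\<in>U. if n = m then r else 0) = r" using finU U_def by simp
  also have "(\<Sum>n\<in>U. \<Sum>\<alpha>\<in>{\<alpha>. \<alpha> \<in> I \<and> \<delta> \<alpha> = n}. b \<alpha>) = (\<Sum>\<alpha>\<in>I. b \<alpha>)"
    by (rule sum.group[OF fin finU]) (auto simp: U_def)
  finally have "(\<Sum>n\<in>{n. c n \<noteq> 0}. c n) = 0" using sm by simp
  then have "c (\<delta> \<alpha>0) = 0" using G_ind[OF finS] cG by blast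
  moreover have "{\<alpha>. \<alpha> \<in> I \<and> \<delta> \<alpha> = \<delta> \<alpha>0} = {\<alpha>0}" using a0 by auto
  ultimately show ?thesis using a0 unfolding c_def by simp
qed

lemma G_disj: "a \<noteq> b \<Longrightarrow> z \<in> G a \<Longrightarrow> z \<in> G b \<Longrightarrow> z = 0"
  using BL[of "{()}" "\<lambda>_. z" "\<lambda>_. a" z b "()"] by simp

lemma one_G0:
  assumes f: "f \<in> G d" "f \<noteq> 0"
  shows "1 \<in> G 0"
proof -
  obtain c where c: "finite {d. c d \<noteq> 0}" "\<forall>d. c d \<in> G d" "1 = (\<Sum>d\<in>{d. c d \<noteq> 0}. c d)"
    using G_dec[of 1] by blast
  define S where "S = {d. c d \<noteq> 0}"
  have sub: "S \<subseteq> {0}"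
  proof
    fix i assume iS: "i \<in> S"
    show "i \<in> {0}"
    proof (rule ccontr)
      assume "i \<notin> {0}"
      have "(\<Sum>j\<in>S. f * c j) = f" using c S_def by (simp add: sum_distrib_left[symmetric])
      then have "f * c i = 0"
        using BL[of S "\<lambda>j. f * c j" "\<lambda>j. d + j" f d i] c iS \<open>i \<notin> {0}\<close> f G_mult S_def by auto
      with f iS S_def show False by simp
    qed
  qed
  show ?thesis
  proof (cases "S = {}")
    case True then show ?thesis using c S_def by simp
  next
    case False then have "S = {0}" using sub by auto
    then show ?thesis using c S_def by (metis empty_iff insert_iff sum.empty sum.insert finite.emptyI add_0_right)
  qed
qed

end

context zg begin

lemma UL:
  assumes one: "1 \<in> G 0" and uv: "u * v = 1"
  shows "\<exists>m. u \<in> G m"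
proof -
  obtain cu where cu: "finite {d. cu d \<noteq> 0}" "\<forall>d. cu d \<in> G d" "u = (\<Sum>d\<in>{d. cu d \<noteq> 0}. cu d)"
    using G_dec[of u] by blast
  obtain cv where cv: "finite {d. cv d \<noteq> 0}" "\<forall>d. cv d \<in> G d" "v = (\<Sum>d\<in>{d. cv d \<noteq> 0}. cv d)"
    using G_dec[of v] by blast
  define S where "S = {d. cu d \<noteq> 0}"
  define T where "T = {d. cv d \<noteq> 0}"
  have fS: "finite S" and fT: "finite T" using cu cv S_def T_def by auto
  have "S \<noteq> {}" using uv cu S_def by auto
  have "T \<noteq> {}" using uv cv T_def by auto
  have prod: "(\<Sum>p\<in>S\<times>T. cu (fst p) * cv (snd p)) = 1"
    using uv cu cv unfolding S_def T_def
    by (simp add: sum_product sum.cartesian_product case_prod_beta)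
  have key: "i + j = 0" if ij: "i \<in> S" "j \<in> T" and ext: "\<And>p. p \<in> S \<times> T \<Longrightarrow> fst p + snd p = i + j \<Longrightarrow> p = (i, j)" for i j
  proof (rule ccontr)
    assume ne: "i + j \<noteq> 0"
    have "cu (fst (i,j)) * cv (snd (i,j)) = 0"
    proof (rule BL[of "S\<times>T" "\<lambda>p. cu (fst p) * cv (snd p)" "\<lambda>p. fst p + snd p" 1 0 "(i,j)"])
      show "finite (S \<times> T)" using fS fT by simp
      show "cu (fst p) * cv (snd p) \<in> G (fst p + snd p)" if "p \<in> S \<times> T" for p
        using G_mult cu(2) cv(2) by blast
      show "(1::'b) \<in> G 0" by (rule one)
      show "(\<Sum>p\<in>S \<times> T. cu (fst p) * cv (snd p)) = 1" by (rule prod)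
      show "(i, j) \<in> S \<times> T" using ij by simp
      show "fst (i, j) + snd (i, j) \<noteq> 0" using ne by simp
      show "p = (i, j)" if "p \<in> S \<times> T" "fst p + snd p = fst (i, j) + snd (i, j)" for p
        using ext that by simp
    qed
    then show False using ij S_def T_def by simp
  qed
  have mx: "Max S + Max T = 0"
  proof (rule key)
    show "Max S \<in> S" "Max T \<in> T" using fS fT \<open>S \<noteq> {}\<close> \<open>T \<noteq> {}\<close> by auto
    fix p assume p: "p \<in> S \<times> T" "fst p + snd p = Max S + Max T"
    have "fst p \<le> Max S" "snd p \<le> Max T" using p fS fT by auto
    then show "p = (Max S, Max T)" using p(2) by (cases p) auto
  qed
  have mn: "Min S + Min T = 0"
  proof (rule key)
    show "Min S \<in> S" "Min T \<in> T" using fS fT \<open>S \<noteq> {}\<close> \<open>T \<noteq> {}\<close> by auto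
    fix p assume p: "p \<in> S \<times> T" "fst p + snd p = Min S + Min T"
    have "fst p \<ge> Min S" "snd p \<ge> Min T" using p fS fT by auto
    then show "p = (Min S, Min T)" using p(2) by (cases p) auto
  qed
  have "Min S \<le> Max S" "Min T \<le> Max T" using fS fT \<open>S \<noteq> {}\<close> \<open>T \<noteq> {}\<close> by auto
  then have "Min S = Max S" using mx mn by linarith
  have xM: "x = Max S" if "x \<in> S" for x
  proof -
    have "x \<le> Max S" "Min S \<le> x" using fS that by auto
    then show ?thesis using \<open>Min S = Max S\<close> by simp
  qed
  define M where "M = Max S"
  have "M \<in> S" using fS \<open>S \<noteq> {}\<close> by (simp add: M_def)
  have "S = {M}"
  proof (rule set_eqI)
    fix x
    have "x \<in> S \<Longrightarrow> x = M" using xM[of x] unfolding M_def by simp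
    then show "x \<in> S \<longleftrightarrow> x \<in> {M}" using \<open>M \<in> S\<close> by blast
  qed
  moreover have "u = sum cu S" using cu S_def by simp
  ultimately have "u = cu M" by simp
  then show ?thesis using cu by blast
qed

lemma KL:
  assumes one: "1 \<in> G 0" and k: "is_subfield k" and u: "u \<in> k"
  shows "u \<in> G 0"
proof -
  have unit: "\<exists>m. w \<in> G m" if "w \<in> k" for w
  proof (cases "w = 0")
    case True then show ?thesis using G0 by blast
  next
    case False
    have "\<forall>a\<in>k. a \<noteq> 0 \<longrightarrow> (\<exists>b\<in>k. a * b = 1)" using k by (simp add: is_subfield_def)
    then have "\<exists>b\<in>k. w * b = 1" using that False by simp
    then obtain v where "w * v = 1" by blast
    then show ?thesis using UL one by blast
  qed
  obtain m where m: "u \<in> G m" using unit u by blast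
  have "1 + u \<in> k" using k u unfolding is_subfield_def is_subring_def by blast
  then obtain m' where m': "1 + u \<in> G m'" using unit by blast
  show ?thesis
  proof (cases "m = 0")
    case True then show ?thesis using m by simp
  next
    case m0: False
    show ?thesis
    proof (cases "m' = 0")
      case True then show ?thesis using G_diff[of "1+u" 0 1] m' one by simp
    next
      case m'0: False
      show ?thesis
      proof (cases "m' = m")
        case True
        have "(1 + u) - u \<in> G m" using G_diff[of "1+u" m u] m' m True by simp
        then have "(1::'b) = 0" using G_disj[of 0 m 1] one m0 by simp
        then show ?thesis by simp
      next
        case False
        have "(\<lambda>b. if b then 1 + u else - u) True = 0"
        proof (rule BL[of UNIV _ "\<lambda>b. if b then m' else m" 1 0])
          show "finite (UNIV::bool set)" by simp
          show "(if b then 1 + u else - u) \<in> G (if b then m' else m)" for b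
            using m m' G_neg by (cases b) auto
          show "(1::'b) \<in> G 0" by (rule one)
          show "(\<Sum>b\<in>UNIV. if b then 1 + u else - u) = 1" by (simp add: UNIV_bool)
          show "True \<in> UNIV" by simp
          show "(if True then m' else m) \<noteq> 0" using m'0 by simp
          show "b = True" if "(if b then m' else m) = (if True then m' else m)" for b
            using that False by (cases b) auto
        qed
        then have "u = -1" by (simp add: eq_neg_iff_add_eq_0 add.commute)
        then show ?thesis using G_neg[OF one] by simp
      qed
    qed
  qed
qed

end

definition emb :: "'b::idom \<Rightarrow> 'b fract" where "emb a = Fract a 1"

lemma emb_add: "emb (a + b) = emb a + emb b" by (simp add: emb_def)
lemma emb_mult: "emb (a * b) = emb a * emb b" by (simp add: emb_def)
lemma emb_neg: "emb (- a) = - emb a" by (simp add: emb_def)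
lemma emb_diff: "emb (a - b) = emb a - emb b" by (simp add: emb_def)
lemma emb_0: "emb 0 = 0" by (simp add: emb_def fract_collapse)
lemma emb_1: "emb 1 = 1" by (simp add: emb_def fract_collapse)
lemma emb_eq_iff: "emb a = emb b \<longleftrightarrow> a = b" by (simp add: emb_def eq_fract)
lemma emb_eq_0: "emb a = 0 \<longleftrightarrow> a = 0" using emb_eq_iff[of a 0] by (simp add: emb_0)
lemma emb_sum: "emb (sum g S) = (\<Sum>x\<in>S. emb (g x))"
  by (induction S rule: infinite_finite_induct) (auto simp: emb_0 emb_add)
lemma emb_prod: "emb (prod g S) = (\<Prod>x\<in>S. emb (g x))"
  by (induction S rule: infinite_finite_induct) (auto simp: emb_1 emb_mult)
lemma emb_power: "emb (a ^ n) = emb a ^ n"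
  by (induction n) (auto simp: emb_1 emb_mult)
lemma Fract_emb: "Fract a b = emb a / emb b"
  by (simp add: emb_def)

locale zg1 = zg G for G :: "int \<Rightarrow> 'b::idom set" +
  assumes one: "1 \<in> G 0"
begin

lemma G_power: "a \<in> G m \<Longrightarrow> a ^ n \<in> G (int n * m)"
proof (induction n)
  case 0 then show ?case using one by simp
next
  case (Suc n)
  then have "a * a ^ n \<in> G (m + int n * m)" using G_mult by blast
  then show ?case by (simp add: algebra_simps)
qed

lemma G_prod: "finite S \<Longrightarrow> (\<And>i. i \<in> S \<Longrightarrow> g i \<in> G (b i)) \<Longrightarrow> prod g S \<in> G (sum b S)"
proof (induction S rule: finite_induct)
  case empty then show ?case using one by simp
next
  case (insert x F)
  then show ?case using G_mult[of "g x" "b x" "prod g F" "sum b F"] by simp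
qed

definition hom :: "int \<Rightarrow> 'b fract set" where
  "hom m = {emb p / emb q | p q a b. p \<in> G a \<and> q \<in> G b \<and> q \<noteq> 0 \<and> a - b = m}"

lemma homI: "p \<in> G a \<Longrightarrow> q \<in> G b \<Longrightarrow> q \<noteq> 0 \<Longrightarrow> a - b = m \<Longrightarrow> emb p / emb q \<in> hom m"
  unfolding hom_def by blast

lemma homE:
  assumes "x \<in> hom m"
  obtains p q a b where "p \<in> G a" "q \<in> G b" "q \<noteq> 0" "a - b = m" "x = emb p / emb q"
  using assms unfolding hom_def by blast

lemma hom_emb: "p \<in> G a \<Longrightarrow> emb p \<in> hom a"
  using homI[of p a 1 0 a] one by (simp add: emb_1)

lemma hom_0: "0 \<in> hom m"
  using hom_emb[OF G0[of m]] by (simp add: emb_0)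

lemma hom_1: "1 \<in> hom 0"
  using hom_emb[OF one] by (simp add: emb_1)

lemma hom_mult:
  assumes "x \<in> hom m" "y \<in> hom n" shows "x * y \<in> hom (m + n)"
proof -
  obtain p q a b where 1: "p \<in> G a" "q \<in> G b" "q \<noteq> 0" "a - b = m" "x = emb p / emb q"
    using assms(1) by (rule homE)
  obtain p' q' a' b' where 2: "p' \<in> G a'" "q' \<in> G b'" "q' \<noteq> 0" "a' - b' = n" "y = emb p' / emb q'"
    using assms(2) by (rule homE)
  have "x * y = emb (p * p') / emb (q * q')" using 1 2 by (simp add: emb_mult)
  moreover have "emb (p * p') / emb (q * q') \<in> hom (m + n)"
    by (rule homI[of _ "a + a'" _ "b + b'"]) (use 1 2 G_mult in auto)
  ultimately show ?thesis by simp
qed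

lemma hom_inverse:
  assumes "x \<in> hom m" shows "inverse x \<in> hom (- m)"
proof -
  obtain p q a b where 1: "p \<in> G a" "q \<in> G b" "q \<noteq> 0" "a - b = m" "x = emb p / emb q"
    using assms by (rule homE)
  show ?thesis
  proof (cases "p = 0")
    case True then show ?thesis using 1 hom_0 by (simp add: emb_0)
  next
    case False
    have "inverse x = emb q / emb p" using 1 by simp
    moreover have "emb q / emb p \<in> hom (- m)" by (rule homI) (use 1 False in auto)
    ultimately show ?thesis by simp
  qed
qed

lemma hom_divide: "x \<in> hom m \<Longrightarrow> y \<in> hom n \<Longrightarrow> x / y \<in> hom (m - n)"
  using hom_mult[OF _ hom_inverse, of x m y n] by (simp add: divide_inverse)

lemma hom_add:
  assumes "x \<in> hom m" "y \<in> hom m" shows "x + y \<in> hom m"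
proof -
  obtain p q a b where 1: "p \<in> G a" "q \<in> G b" "q \<noteq> 0" "a - b = m" "x = emb p / emb q"
    using assms(1) by (rule homE)
  obtain p' q' a' b' where 2: "p' \<in> G a'" "q' \<in> G b'" "q' \<noteq> 0" "a' - b' = m" "y = emb p' / emb q'"
    using assms(2) by (rule homE)
  have nz: "emb q \<noteq> 0" "emb q' \<noteq> 0" using 1 2 by (auto simp: emb_eq_0)
  have "x + y = emb (p * q' + p' * q) / emb (q * q')" using 1 2 nz
    by (simp add: emb_mult emb_add field_simps)
  moreover have "p * q' + p' * q \<in> G (a + b')"
  proof (rule G_add)
    show "p * q' \<in> G (a + b')" using 1 2 G_mult by blast
    have "a' + b = a + b'" using 1 2 by simp
    then show "p' * q \<in> G (a + b')" using 1 2 G_mult by metis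
  qed
  ultimately show ?thesis using 1 2 G_mult homI[of "p * q' + p' * q" "a + b'" "q * q'" "b + b'" m] by auto
qed

lemma hom_neg: "x \<in> hom m \<Longrightarrow> - x \<in> hom m"
  by (elim homE) (metis G_neg emb_neg homI minus_divide_left)

lemma hom_diff: "x \<in> hom m \<Longrightarrow> y \<in> hom m \<Longrightarrow> x - y \<in> hom m"
  using hom_add[OF _ hom_neg, of x m y] by simp

lemma hom_power: "x \<in> hom m \<Longrightarrow> x ^ n \<in> hom (int n * m)"
proof (induction n)
  case 0 then show ?case using hom_1 by simp
next
  case (Suc n)
  then have "x * x ^ n \<in> hom (m + int n * m)" using hom_mult by blast
  then show ?case by (simp add: algebra_simps)
qed

lemma hom_sum: "finite S \<Longrightarrow> (\<And>i. i \<in> S \<Longrightarrow> g i \<in> hom m) \<Longrightarrow> sum g S \<in> hom m"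
  by (induction S rule: finite_induct) (auto intro: hom_0 hom_add)

lemma hom_prod0: "finite S \<Longrightarrow> (\<And>i. i \<in> S \<Longrightarrow> g i \<in> hom 0) \<Longrightarrow> prod g S \<in> hom 0"
  by (induction S rule: finite_induct) (use hom_1 hom_mult[of _ 0 _ 0] in auto)

end

context zg1 begin

lemma FL:
  assumes fin: "finite J" and inj: "inj_on \<delta> J" and h: "\<And>j. j \<in> J \<Longrightarrow> h j \<in> hom (\<delta> j)"
    and sm: "(\<Sum>j\<in>J. h j) = 0" and j0: "j0 \<in> J"
  shows "h j0 = 0"
proof -
  have "\<forall>j\<in>J. \<exists>p q a b. p \<in> G a \<and> q \<in> G b \<and> q \<noteq> 0 \<and> a - b = \<delta> j \<and> h j = emb p / emb q"
    using h unfolding hom_def by blast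
  then obtain p q a b where pq: "\<And>j. j \<in> J \<Longrightarrow> p j \<in> G (a j) \<and> q j \<in> G (b j) \<and> q j \<noteq> 0 \<and> a j - b j = \<delta> j \<and> h j = emb (p j) / emb (q j)"
    by metis
  define tm where "tm j = p j * (\<Prod>i\<in>J-{j}. q i)" for j
  have qnz: "(\<Prod>i\<in>J-{j}. q i) \<noteq> 0" for j using pq fin by (simp add: prod_zero_iff)
  have emb_tm: "emb (tm j) = h j * emb (\<Prod>i\<in>J. q i)" if "j \<in> J" for j
  proof -
    have "(\<Prod>i\<in>J. q i) = q j * (\<Prod>i\<in>J-{j}. q i)" using fin that by (simp add: prod.remove)
    moreover have "emb (q j) \<noteq> 0" using pq that by (simp add: emb_eq_0)
    ultimately show ?thesis using pq[OF that] by (simp add: tm_def emb_mult)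
  qed
  have "emb (\<Sum>j\<in>J. tm j) = (\<Sum>j\<in>J. h j) * emb (\<Prod>i\<in>J. q i)"
    by (simp add: emb_sum emb_tm sum_distrib_right)
  then have sm0: "(\<Sum>j\<in>J. tm j) = 0" using sm by (simp add: emb_eq_0)
  have tmG: "tm j \<in> G (\<delta> j + sum b J)" if "j \<in> J" for j
  proof -
    have "tm j \<in> G (a j + sum b (J - {j}))"
      unfolding tm_def using pq that by (intro G_mult G_prod) (auto simp: fin)
    moreover have "a j + sum b (J - {j}) = \<delta> j + sum b J"
      using pq[OF that] fin that by (simp add: sum.remove)
    ultimately show ?thesis by simp
  qed
  have "tm j0 = 0"
    by (rule BL[of J tm "\<lambda>j. \<delta> j + sum b J" 0 "\<delta> j0 + sum b J + 1" j0])
       (use fin tmG G0 sm0 j0 inj in \<open>auto simp: inj_on_def\<close>)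
  then have "p j0 = 0" using qnz unfolding tm_def by simp
  then show ?thesis using pq[OF j0] by (simp add: emb_0)
qed

end

section \<open>Generic subfield facts\<close>

lemma SF_0: "is_subfield L \<Longrightarrow> 0 \<in> L" by (simp add: is_subfield_def is_subring_def)
lemma SF_1: "is_subfield L \<Longrightarrow> 1 \<in> L" by (simp add: is_subfield_def is_subring_def)
lemma SF_add: "is_subfield L \<Longrightarrow> a \<in> L \<Longrightarrow> b \<in> L \<Longrightarrow> a + b \<in> L" by (simp add: is_subfield_def is_subring_def)
lemma SF_diff: "is_subfield L \<Longrightarrow> a \<in> L \<Longrightarrow> b \<in> L \<Longrightarrow> a - b \<in> L" by (simp add: is_subfield_def is_subring_def)
lemma SF_mult: "is_subfield L \<Longrightarrow> a \<in> L \<Longrightarrow> b \<in> L \<Longrightarrow> a * b \<in> L" by (simp add: is_subfield_def is_subring_def)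
lemma SF_inverse:
  fixes a :: "'a::field"
  assumes "is_subfield L" "a \<in> L" shows "inverse a \<in> L"
proof (cases "a = 0")
  case True then show ?thesis using SF_0[OF assms(1)] by simp
next
  case False
  then obtain b where "b \<in> L" "a * b = 1" using assms unfolding is_subfield_def by blast
  then have "b = inverse a" using False by (metis inverse_unique)
  then show ?thesis using \<open>b \<in> L\<close> by simp
qed
lemma SF_divide: "is_subfield L \<Longrightarrow> (a::'a::field) \<in> L \<Longrightarrow> b \<in> L \<Longrightarrow> a / b \<in> L"
  by (simp add: divide_inverse SF_mult SF_inverse)
lemma SF_sum: "is_subfield L \<Longrightarrow> (\<And>i. i \<in> S \<Longrightarrow> g i \<in> L) \<Longrightarrow> sum g S \<in> L"
  by (induction S rule: infinite_finite_induct) (auto intro: SF_0 SF_add)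
lemma SF_power: "is_subfield L \<Longrightarrow> a \<in> L \<Longrightarrow> a ^ n \<in> L"
  by (induction n) (auto intro: SF_1 SF_mult)

lemma SF_poly: "is_subfield L \<Longrightarrow> (\<And>n. coeff p n \<in> L) \<Longrightarrow> t \<in> L \<Longrightarrow> poly p t \<in> L"
proof (induction p)
  case (pCons a p)
  have "coeff p n \<in> L" for n using pCons.prems(2)[of "Suc n"] by simp
  then have "poly p t \<in> L" using pCons by blast
  moreover have "a \<in> L" using pCons.prems(2)[of 0] by simp
  ultimately show ?case using pCons.prems by (simp add: SF_add SF_mult)
qed (simp add: SF_0)

lemma field_gen_subfield: "is_subfield (field_gen (S::'a::field set))"
proof -
  have z: "0 \<in> field_gen S" and o: "1 \<in> field_gen S" unfolding field_gen_def using SF_0 SF_1 by blast+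
  have ad: "x + y \<in> field_gen S" "x - y \<in> field_gen S" "x * y \<in> field_gen S"
    if "x \<in> field_gen S" "y \<in> field_gen S" for x y
    using that unfolding field_gen_def using SF_add SF_diff SF_mult by blast+
  have iv: "inverse x \<in> field_gen S" if "x \<in> field_gen S" for x
    using that unfolding field_gen_def using SF_inverse by blast
  show ?thesis unfolding is_subfield_def is_subring_def
    using z o ad iv by (metis right_inverse)
qed

lemma field_gen_sup: "S \<subseteq> field_gen S"
  unfolding field_gen_def by blast

section \<open>Cylindrical setting\<close>

locale cyl = zg1 G for G :: "int \<Rightarrow> 'b::idom set" +
  fixes f d A t
  assumes f: "f \<in> G d" "f \<noteq> 0" "d \<noteq> 0"
    and Asub: "is_subring A" "A \<subseteq> hloc0 G d f"
    and tC: "t \<in> hloc0 G d f"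
    and C: "hloc0 G d f = {poly p t | p. set (coeffs p) \<subseteq> A}"
    and tr: "\<forall>p. set (coeffs p) \<subseteq> A \<and> poly p t = 0 \<longrightarrow> p = 0"
begin

lemma A_0: "0 \<in> A" and A_1: "1 \<in> A" using Asub by (auto simp: is_subring_def)
lemma A_add: "a \<in> A \<Longrightarrow> b \<in> A \<Longrightarrow> a + b \<in> A" using Asub by (auto simp: is_subring_def)
lemma A_diff: "a \<in> A \<Longrightarrow> b \<in> A \<Longrightarrow> a - b \<in> A" using Asub by (auto simp: is_subring_def)
lemma A_mult: "a \<in> A \<Longrightarrow> b \<in> A \<Longrightarrow> a * b \<in> A" using Asub by (auto simp: is_subring_def)
lemma A_sum: "(\<And>i. i \<in> S \<Longrightarrow> g i \<in> A) \<Longrightarrow> sum g S \<in> A"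
  by (induction S rule: infinite_finite_induct) (auto intro: A_0 A_add)

lemma coeffsA: "set (coeffs p) \<subseteq> A \<longleftrightarrow> (\<forall>n. coeff p n \<in> A)"
  using forall_coeffs_conv[of "\<lambda>c. c \<in> A" p] A_0 by auto

lemma trA: "(\<And>n. coeff p n \<in> A) \<Longrightarrow> poly p t = 0 \<Longrightarrow> p = 0"
  using tr coeffsA by blast

lemma C_elem: "z \<in> hloc0 G d f \<Longrightarrow> \<exists>p. (\<forall>n. coeff p n \<in> A) \<and> z = poly p t"
  using C coeffsA by auto

lemma C_hom: "z \<in> hloc0 G d f \<Longrightarrow> z \<in> hom 0"
proof -
  assume "z \<in> hloc0 G d f"
  then obtain n a where "a \<in> G (int n * d)" "z = Fract a (f ^ n)" unfolding hloc0_def by blast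
  then show "z \<in> hom 0" using homI[of a "int n * d" "f ^ n" "int n * d" 0] G_power[OF f(1), of n] f(2)
    by (simp add: Fract_emb emb_power)
qed

lemma A_hom: "a \<in> A \<Longrightarrow> a \<in> hom 0" using Asub C_hom by blast

definition K where "K = {a / b | a b. a \<in> A \<and> b \<in> A \<and> b \<noteq> 0}"

lemma A_K: "a \<in> A \<Longrightarrow> a \<in> K"
  unfolding K_def using A_1 by (metis (mono_tags, lifting) div_by_1 mem_Collect_eq one_neq_zero)

lemma K_I: "a \<in> A \<Longrightarrow> b \<in> A \<Longrightarrow> b \<noteq> 0 \<Longrightarrow> a / b \<in> K"
  unfolding K_def by blast

lemma K_subfield: "is_subfield K"
  unfolding is_subfield_def is_subring_def
proof (intro conjI ballI impI)
  show "0 \<in> K" "1 \<in> K" using A_K A_0 A_1 by auto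
  fix x y assume x: "x \<in> K" and y: "y \<in> K"
  from x obtain a b where ab: "a \<in> A" "b \<in> A" "b \<noteq> 0" "x = a / b" unfolding K_def by blast
  from y obtain a' b' where ab': "a' \<in> A" "b' \<in> A" "b' \<noteq> 0" "y = a' / b'" unfolding K_def by blast
  have "x + y = (a * b' + a' * b) / (b * b')" using ab ab' by (simp add: field_simps)
  then show "x + y \<in> K" using ab ab' K_I[of "a * b' + a' * b" "b * b'"] by (simp add: A_add A_mult)
  have "x - y = (a * b' - a' * b) / (b * b')" using ab ab' by (simp add: field_simps)
  then show "x - y \<in> K" using ab ab' K_I[of "a * b' - a' * b" "b * b'"] by (simp add: A_diff A_mult)
  have "x * y = (a * a') / (b * b')" using ab ab' by simp
  then show "x * y \<in> K" using ab ab' K_I[of "a * a'" "b * b'"] by (simp add: A_mult)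
next
  fix x assume x: "x \<in> K" "x \<noteq> 0"
  from x obtain a b where ab: "a \<in> A" "b \<in> A" "b \<noteq> 0" "x = a / b" unfolding K_def by blast
  then have "a \<noteq> 0" using x by auto
  have "b / a \<in> K" unfolding K_def using ab \<open>a \<noteq> 0\<close> by blast
  moreover have "x * (b / a) = 1" using ab \<open>a \<noteq> 0\<close> by simp
  ultimately show "\<exists>y\<in>K. x * y = 1" by blast
qed

lemma K_hom: "x \<in> K \<Longrightarrow> x \<in> hom 0"
  unfolding K_def using A_hom hom_divide[of _ 0 _ 0] by auto

lemma poly_hom: "(\<And>n. coeff q n \<in> K) \<Longrightarrow> poly q t \<in> hom 0"
proof (induction q)
  case (pCons a p)
  have "coeff p n \<in> K" for n using pCons.prems[of "Suc n"] by simp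
  then have "poly p t \<in> hom 0" using pCons by blast
  moreover have "a \<in> hom 0" using pCons.prems[of 0] K_hom by simp
  moreover have "t \<in> hom 0" using C_hom tC by blast
  ultimately show ?case using hom_add hom_mult[of t 0 _ 0] by simp
qed (simp add: hom_0)

lemma common_denom: "finite X \<Longrightarrow> X \<subseteq> K \<Longrightarrow> \<exists>D\<in>A. D \<noteq> 0 \<and> (\<forall>x\<in>X. D * x \<in> A)"
proof (induction X rule: finite_induct)
  case empty then show ?case using A_1 by (intro bexI[of _ 1]) auto
next
  case (insert x X)
  then obtain D where D: "D \<in> A" "D \<noteq> 0" "\<forall>x\<in>X. D * x \<in> A" by auto
  from insert obtain a b where ab: "a \<in> A" "b \<in> A" "b \<noteq> 0" "x = a / b" unfolding K_def by blast
  have "D * b * x = D * a" using ab by simp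
  moreover have "D * b * y \<in> A" if "y \<in> X" for y
    using A_mult[of b "D * y"] D(3) that ab(2) by (simp add: algebra_simps)
  ultimately show ?case using D ab by (intro bexI[of _ "D * b"]) (auto intro: A_mult)
qed

lemma trK: assumes "\<And>n. coeff q n \<in> K" "poly q t = 0" shows "q = 0"
proof -
  have "finite (coeff q ` {..degree q})" by simp
  moreover have "coeff q ` {..degree q} \<subseteq> K" using assms by auto
  ultimately obtain D where D: "D \<in> A" "D \<noteq> 0" "\<forall>x\<in>coeff q ` {..degree q}. D * x \<in> A"
    using common_denom by blast
  have "coeff (smult D q) n \<in> A" for n
  proof (cases "n \<le> degree q")
    case True then show ?thesis using D by auto
  next
    case False then show ?thesis using A_0 by (simp add: coeff_eq_0)
  qed
  moreover have "poly (smult D q) t = 0" using assms by simp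
  ultimately have "smult D q = 0" using trA by blast
  then show ?thesis using D by simp
qed

end

context cyl begin

lemma coeff_mult_A: "(\<And>n. coeff p n \<in> A) \<Longrightarrow> (\<And>n. coeff q n \<in> A) \<Longrightarrow> coeff (p * q) n \<in> A"
  by (simp add: coeff_mult A_sum A_mult)

lemma k_K: assumes k: "is_subfield k" and u: "u \<in> k" shows "emb u \<in> K"
proof (cases "u = 0")
  case True then show ?thesis using A_K A_0 by (simp add: emb_0)
next
  case False
  have "\<forall>a\<in>k. a \<noteq> 0 \<longrightarrow> (\<exists>b\<in>k. a * b = 1)" using k by (simp add: is_subfield_def)
  then obtain v where v: "v \<in> k" "u * v = 1" using u False by blast
  have inC: "emb w \<in> hloc0 G d f" if "w \<in> k" for w
  proof -
    have "w \<in> G (int 0 * d)" using KL[OF one k that] by simp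
    moreover have "emb w = Fract w (f ^ 0)" by (simp add: emb_def)
    ultimately show ?thesis unfolding hloc0_def by blast
  qed
  obtain p where p: "\<And>n. coeff p n \<in> A" "emb u = poly p t" using C_elem[OF inC[OF u]] by blast
  obtain q where q: "\<And>n. coeff q n \<in> A" "emb v = poly q t" using C_elem[OF inC[OF v(1)]] by blast
  have "emb u * emb v = 1" using v by (simp flip: emb_mult add: emb_1)
  then have "poly (p * q - 1) t = 0" using p q by simp
  moreover have "coeff (p * q - 1) n \<in> A" for n
    using coeff_mult_A[OF p(1) q(1)] A_0 A_1 by (auto simp: coeff_1 intro!: A_diff)
  ultimately have pq: "p * q = 1" using trA by fastforce
  then have "p \<noteq> 0" "q \<noteq> 0" by auto
  then have "degree p + degree q = 0" using degree_mult_eq[of p q] pq by simp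
  then have "degree p = 0" by simp
  then have "poly p t = coeff p 0" by (simp add: poly_altdef)
  then show ?thesis using p A_K by simp
qed

end

context cyl begin

definition E where "E = {m. \<exists>z\<in>hom m. z \<noteq> 0}"

lemma E_diff: assumes "m \<in> E" "n \<in> E" shows "m - n \<in> E"
proof -
  obtain z where z: "z \<in> hom m" "z \<noteq> 0" using assms(1) unfolding E_def by blast
  obtain w where w: "w \<in> hom n" "w \<noteq> 0" using assms(2) unfolding E_def by blast
  have "z / w \<in> hom (m - n)" "z / w \<noteq> 0" using hom_divide[OF z(1) w(1)] z w by auto
  then show ?thesis unfolding E_def by blast
qed

lemma E_0: "0 \<in> E" unfolding E_def using hom_1 by (intro CollectI bexI[of _ 1]) auto

lemma E_mult_nat: "m \<in> E \<Longrightarrow> int j * m \<in> E"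
proof (induction j)
  case 0 then show ?case using E_0 by simp
next
  case (Suc j)
  then have "m - (0 - int j * m) \<in> E" using E_diff E_0 by blast
  then show ?case by (simp add: algebra_simps)
qed

lemma E_mult: "m \<in> E \<Longrightarrow> i * m \<in> E"
proof (cases "i \<ge> 0")
  case True
  assume "m \<in> E"
  then have "int (nat i) * m \<in> E" by (rule E_mult_nat)
  then show ?thesis using True by simp
next
  case False
  assume "m \<in> E"
  then have "0 - int (nat (- i)) * m \<in> E" using E_mult_nat E_diff E_0 by blast
  then show ?thesis using False by simp
qed

lemma E_d: "d \<in> E"
  unfolding E_def using hom_emb[OF f(1)] f(2) emb_eq_0[of f] by blast

definition e :: nat where "e = (LEAST n. 0 < n \<and> int n \<in> E)"

lemma e_props: "0 < e" "int e \<in> E"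
proof -
  have "0 < nat \<bar>d\<bar> \<and> int (nat \<bar>d\<bar>) \<in> E"
    using f(3) E_d E_mult[OF E_d, of "-1"] by (cases "d \<ge> 0") auto
  then have "0 < e \<and> int e \<in> E" unfolding e_def by (rule LeastI)
  then show "0 < e" "int e \<in> E" by auto
qed

lemma E_dvd: assumes "m \<in> E" shows "\<exists>j. m = j * int e"
proof -
  have "m - m div int e * int e \<in> E" using E_diff[OF assms E_mult[OF e_props(2)]] by blast
  then have r: "m mod int e \<in> E" by (simp add: minus_div_mult_eq_mod)
  have "m mod int e = 0"
  proof (rule ccontr)
    assume "m mod int e \<noteq> 0"
    moreover have "0 \<le> m mod int e" "m mod int e < int e" using e_props(1) by simp_all
    ultimately have "0 < m mod int e" "m mod int e < int e" by auto
    then have "0 < nat (m mod int e) \<and> int (nat (m mod int e)) \<in> E" "nat (m mod int e) < e" using r by auto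
    then show False using not_less_Least[of "nat (m mod int e)" "\<lambda>n. 0 < n \<and> int n \<in> E"] unfolding e_def by blast
  qed
  then show ?thesis by (metis mult_div_mod_eq add_0_right mult.commute)
qed

definition y where "y = (SOME z. z \<in> hom (int e) \<and> z \<noteq> 0)"

lemma y_props: "y \<in> hom (int e)" "y \<noteq> 0"
proof -
  have "\<exists>z. z \<in> hom (int e) \<and> z \<noteq> 0" using e_props(2) unfolding E_def by blast
  then have "y \<in> hom (int e) \<and> y \<noteq> 0" unfolding y_def by (rule someI_ex)
  then show "y \<in> hom (int e)" "y \<noteq> 0" by auto
qed

lemma hom0_L:
  assumes L: "is_subfield L" "K \<subseteq> L" "t \<in> L" and z: "z \<in> hom 0"
  shows "z \<in> L"
proof -
  have CL: "c \<in> L" if cC: "c \<in> hloc0 G d f" for c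
  proof -
    obtain p where p: "\<And>n. coeff p n \<in> A" "c = poly p t" using C_elem[OF cC] by blast
    show ?thesis using p L SF_poly[OF L(1) _ L(3), of p] A_K by blast
  qed
  obtain p q a b where pq: "p \<in> G a" "q \<in> G b" "q \<noteq> 0" "a - b = 0" "z = emb p / emb q"
    using z by (rule homE)
  define w where "w = q ^ (nat \<bar>d\<bar> - 1) * f ^ (nat \<bar>a\<bar>)"
  define N where "N = nat (a * sgn d + \<bar>a\<bar>)"
  have wG: "w \<in> G (int (nat \<bar>d\<bar> - 1) * a + int (nat \<bar>a\<bar>) * d)"
  proof -
    have "q \<in> G a" using pq by simp
    then show ?thesis
      unfolding w_def using G_mult[OF G_power[of q a] G_power[OF f(1)], of "nat \<bar>d\<bar> - 1" "nat \<bar>a\<bar>"] by simp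
  qed
  have deg: "a + (int (nat \<bar>d\<bar> - 1) * a + int (nat \<bar>a\<bar>) * d) = int N * d"
  proof -
    have i1: "int (nat \<bar>d\<bar> - 1) = \<bar>d\<bar> - 1" using f(3) by simp
    have i2: "int N = a * sgn d + \<bar>a\<bar>" unfolding N_def using f(3)
      by (cases "d > 0"; cases "a \<ge> 0") (auto simp: sgn_if)
    have sd: "sgn d * d = \<bar>d\<bar>" using f(3) by (cases "d > 0") (auto simp: sgn_if)
    have l: "a + ((\<bar>d\<bar> - 1) * a + \<bar>a\<bar> * d) = a * \<bar>d\<bar> + \<bar>a\<bar> * d" by (simp add: algebra_simps)
    have r: "(a * sgn d + \<bar>a\<bar>) * d = a * \<bar>d\<bar> + \<bar>a\<bar> * d"
      by (simp add: distrib_right mult.assoc sd)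
    show ?thesis unfolding i1 i2 using l r by simp
  qed
  have b: "b = a" using pq by simp
  have c1: "Fract (p * w) (f ^ N) \<in> hloc0 G d f"
  proof -
    have "p * w \<in> G (int N * d)" using G_mult[OF pq(1) wG] unfolding deg .
    then show ?thesis unfolding hloc0_def by blast
  qed
  have c2: "Fract (q * w) (f ^ N) \<in> hloc0 G d f"
  proof -
    have "q * w \<in> G (int N * d)" using G_mult[OF pq(2) wG] unfolding b deg .
    then show ?thesis unfolding hloc0_def by blast
  qed
  have nz: "emb w \<noteq> 0" "emb (f ^ N) \<noteq> 0" "emb q \<noteq> 0" using pq f unfolding w_def by (auto simp: emb_eq_0)
  have "z = Fract (p * w) (f ^ N) / Fract (q * w) (f ^ N)"
    using nz pq by (simp add: Fract_emb emb_mult)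
  then show ?thesis using CL c1 c2 SF_divide L(1) by metis
qed

end

context cyl begin

lemma all_L:
  assumes L: "is_subfield L" "K \<subseteq> L" "t \<in> L" "y \<in> L"
  shows "z \<in> L"
proof -
  have hL: "emb b \<in> L" if bG: "b \<in> G m" for b m
  proof (cases "b = 0")
    case True then show ?thesis using SF_0[OF L(1)] by (simp add: emb_0)
  next
    case False
    have "m \<in> E" unfolding E_def using hom_emb[OF bG] False emb_eq_0[of b] by blast
    then obtain j where j: "m = j * int e" using E_dvd by blast
    show ?thesis
    proof (cases "j \<ge> 0")
      case True
      define n where "n = nat j"
      have yn: "y ^ n \<in> hom (int n * int e)" "y ^ n \<noteq> 0" using hom_power y_props by auto
      have "emb b / y ^ n \<in> hom (m - int n * int e)" using hom_divide[OF hom_emb[OF bG] yn(1)] .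
      moreover have "m - int n * int e = 0" using j True n_def by simp
      ultimately have "emb b / y ^ n \<in> L" using hom0_L[OF L(1-3)] by simp
      moreover have "emb b = (emb b / y ^ n) * y ^ n" using yn by simp
      ultimately show ?thesis using SF_mult[OF L(1)] SF_power[OF L(1) L(4)] by metis
    next
      case False
      define n where "n = nat (- j)"
      have yn: "y ^ n \<in> hom (int n * int e)" "y ^ n \<noteq> 0" using hom_power y_props by auto
      have "emb b * y ^ n \<in> hom (m + int n * int e)" using hom_mult[OF hom_emb[OF bG] yn(1)] .
      moreover have "m + int n * int e = 0" using j False n_def by simp
      ultimately have "emb b * y ^ n \<in> L" using hom0_L[OF L(1-3)] by simp
      moreover have "emb b = (emb b * y ^ n) / y ^ n" using yn by simp
      ultimately show ?thesis using SF_divide[OF L(1)] SF_power[OF L(1) L(4)] by metis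
    qed
  qed
  have bL: "emb b \<in> L" for b
  proof -
    obtain c where c: "\<forall>d. c d \<in> G d" "b = (\<Sum>d\<in>{d. c d \<noteq> 0}. c d)" using G_dec[of b] by blast
    then have "emb b = (\<Sum>d\<in>{d. c d \<noteq> 0}. emb (c d))" by (simp add: emb_sum)
    then show ?thesis using SF_sum[OF L(1)] hL c(1) by metis
  qed
  obtain a b where "z = Fract a b" by (cases z)
  then have "z = emb a / emb b" by (simp add: Fract_emb)
  then show ?thesis using bL SF_divide[OF L(1)] by metis
qed

lemma indep: "alg_indep2 K t y"
  unfolding alg_indep2_def
proof (intro allI impI)
  fix P :: "'b fract poly poly"
  assume H: "(\<forall>q\<in>set (coeffs P). set (coeffs q) \<subseteq> K) \<and> poly (map_poly (\<lambda>q. poly q t) P) y = 0"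
  have K0: "0 \<in> K" using SF_0[OF K_subfield] .
  have cK: "coeff (coeff P j) n \<in> K" for j n
  proof -
    have "\<forall>c\<in>set (coeffs P). \<forall>n. coeff c n \<in> K"
      using H forall_coeffs_conv[of "\<lambda>c. c \<in> K"] K0 by blast
    then have "\<forall>j. \<forall>n. coeff (coeff P j) n \<in> K"
      using forall_coeffs_conv[of "\<lambda>c. \<forall>n. coeff c n \<in> K" P] K0 by simp
    then show ?thesis by blast
  qed
  define g where "g = (\<lambda>q. poly q t)"
  have g0: "g 0 = 0" unfolding g_def by simp
  have ev: "poly (map_poly g P) y = (\<Sum>j\<le>degree P. poly (coeff P j) t * y ^ j)"
  proof -
    have "poly (map_poly g P) y = (\<Sum>j\<le>degree (map_poly g P). coeff (map_poly g P) j * y ^ j)"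
      by (rule poly_altdef)
    also have "\<dots> = (\<Sum>j\<le>degree P. coeff (map_poly g P) j * y ^ j)"
      by (rule sum.mono_neutral_left) (auto simp: map_poly_degree_leq coeff_eq_0)
    also have "\<dots> = (\<Sum>j\<le>degree P. poly (coeff P j) t * y ^ j)"
      unfolding g_def using coeff_map_poly[of "\<lambda>q. poly q t"] by simp
    finally show ?thesis .
  qed
  have z: "poly (coeff P j) t * y ^ j = 0" if "j \<in> {..degree P}" for j
  proof (rule FL[of "{..degree P}" "\<lambda>j. int j * int e"])
    show "finite {..degree P}" by simp
    show "inj_on (\<lambda>j. int j * int e) {..degree P}" using e_props(1) by (auto simp: inj_on_def)
    show "poly (coeff P j) t * y ^ j \<in> hom (int j * int e)" for j
      using hom_mult[OF poly_hom[OF cK] hom_power[OF y_props(1)], of j] by simp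
    show "(\<Sum>j\<le>degree P. poly (coeff P j) t * y ^ j) = 0" using H ev g_def by simp
    show "j \<in> {..degree P}" by (rule that)
  qed
  have "coeff P j = 0" for j
  proof (cases "j \<le> degree P")
    case True
    then have "poly (coeff P j) t = 0" using z y_props(2) by simp
    then show ?thesis using trK cK by blast
  next
    case False then show ?thesis by (simp add: coeff_eq_0)
  qed
  then show "P = 0" by (simp add: poly_eqI)
qed

end

theorem proposition1p3:
  fixes G :: "int \<Rightarrow> 'b::idom set" and k :: "'b set"
  assumes "Z_grading G"
    and "is_subfield k"
    and "\<exists>f. cylindrical G f"
  shows "\<exists>(K :: 'b fract set) x y. is_subfield K \<and> (\<lambda>a. Fract a 1) ` k \<subseteq> K \<and>
           alg_indep2 K x y \<and> field_gen (K \<union> {x, y}) = UNIV"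
proof -
  obtain f d where fd: "f \<noteq> 0" "d \<noteq> 0" "f \<in> G d" "poly_ring1 (hloc0 G d f)"
    using assms(3) unfolding cylindrical_def by blast
  obtain A t where At: "is_subring A" "A \<subseteq> hloc0 G d f" "t \<in> hloc0 G d f"
      "hloc0 G d f = {poly p t | p. set (coeffs p) \<subseteq> A}"
      "\<forall>p. set (coeffs p) \<subseteq> A \<and> poly p t = 0 \<longrightarrow> p = 0"
    using fd(4) unfolding poly_ring1_def by blast
  interpret zg G by unfold_locales (rule assms(1))
  have one: "1 \<in> G 0" using one_G0[OF fd(3) fd(1)] .
  interpret cyl G f d A t
    by unfold_locales (use one fd At in auto)
  have sub: "K \<union> {t, y} \<subseteq> field_gen (K \<union> {t, y})" by (rule field_gen_sup)
  have "field_gen (K \<union> {t, y}) = UNIV"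
    using all_L[OF field_gen_subfield] sub by blast
  moreover have "(\<lambda>a. Fract a 1) ` k \<subseteq> K" using k_K[OF assms(2)] unfolding emb_def by blast
  ultimately show ?thesis using K_subfield indep by blast
qed

end
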